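(* Let $\Gamma_n = \log\log(d_n+1) - (n-1)$. Then $\Gamma_n>0$ for all $n\ge1$, and $\Gamma_{n+1}<\Gamma_n$ for all $n\ge 2$.
   Context: All logarithms $\log$ are to base $2$. A delta-matroid $(E,\mathcal F)$ consists of a finite ground set $E$ and a non-empty collection $\mathcal F$ of subsets of $E$ (the feasible sets) satisfying the symmetric exchange axiom: for all $X,Y\in\mathcal F$ and every $e\in X\triangle Y$ there exists $f\in X\triangle Y$ (possibly $f=e$) with $X\triangle\{e,f\}\in\mathcal F$. Let $d_n$ denote the number of labelled delta-matroids with ground set $[n]=\{1,\dots,n\}$, i.e. the number of collections $\mathcal F$ of subsets of $[n]$ such that $([n],\mathcal F)$ is a delta-matroid. *)

theory Defs
  imports Complex_Main
begin

definition delta_matroid :: "'a set \<Rightarrow> 'a set set \<Rightarrow> bool" where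
  "delta_matroid E F \<longleftrightarrow> finite E \<and> F \<noteq> {} \<and> F \<subseteq> Pow E \<and>
     (\<forall>X\<in>F. \<forall>Y\<in>F. \<forall>e\<in>X \<union> Y - (X \<inter> Y).
        \<exists>f\<in>X \<union> Y - (X \<inter> Y). (X - {e, f}) \<union> ({e, f} - X) \<in> F)"

definition d :: "nat \<Rightarrow> nat" where
  "d n = card {F. delta_matroid {1..n} F}"

definition Gamma :: "nat \<Rightarrow> real" where
  "Gamma n = log 2 (log 2 (real (d n) + 1)) - (real n - 1)"

end

theory Submission
  imports Defs
begin

definition tog :: "'a set \<Rightarrow> 'a \<Rightarrow> 'a set" where
  "tog X e = (if e \<in> X then X - {e} else insert e X)"

lemma symd_eq: "(X - {e,f}) \<union> ({e,f} - X) = (if e = f then tog X e else tog (tog X e) f)"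
  by (auto simp: tog_def)

lemma tog_tog: "tog (tog X e) e = X"
  by (auto simp: tog_def)

lemma tog_fin: "finite X \<Longrightarrow> finite (tog X e)"
  by (simp add: tog_def)

lemma tog_odd: "finite X \<Longrightarrow> odd (card (tog X e)) \<longleftrightarrow> even (card X)"
proof (cases "e \<in> X")
  case True
  assume f: "finite X"
  then have "card X \<ge> 1" using True by (metis One_nat_def Suc_leI card_gt_0_iff empty_iff)
  then show ?thesis using True f by (auto simp add: tog_def card_Diff_singleton)
next
  case False
  assume f: "finite X"
  then show ?thesis using False by (simp add: tog_def)
qed

lemma dm_finite: "finite E \<Longrightarrow> finite {F. delta_matroid E F}"
  by (rule finite_subset[of _ "Pow (Pow E)"]) (auto simp: delta_matroid_def)

lemma lowerA:
  assumes n: "n \<ge> 1"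
  shows "2^(2^(n-1)) \<le> d n"
proof -
  define E where "E = {1..n}"
  define Ev where "Ev = {X. X \<subseteq> E \<and> even (card X)}"
  define Od where "Od = {X. X \<subseteq> E \<and> odd (card X)}"
  have fE: "finite E" by (simp add: E_def)
  have oneE: "1 \<in> E" using n by (simp add: E_def)
  have dmG: "delta_matroid E (Od \<union> G)" if G: "G \<subseteq> Ev" for G
  proof -
    have "{1} \<in> Od" using oneE by (auto simp: Od_def)
    hence ne: "Od \<union> G \<noteq> {}" by auto
    have sub: "Od \<union> G \<subseteq> Pow E" using G by (auto simp: Od_def Ev_def)
    have ex: "\<forall>X\<in>Od \<union> G. \<forall>Y\<in>Od \<union> G. \<forall>e\<in>X \<union> Y - (X \<inter> Y).
        \<exists>f\<in>X \<union> Y - (X \<inter> Y). (X - {e, f}) \<union> ({e, f} - X) \<in> Od \<union> G"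
    proof (intro ballI)
      fix X Y e assume X: "X \<in> Od \<union> G" and Y: "Y \<in> Od \<union> G" and e: "e \<in> X \<union> Y - (X \<inter> Y)"
      have XE: "X \<subseteq> E" "Y \<subseteq> E" using X Y sub by auto
      hence fX: "finite X" using fE by (auto intro: finite_subset)
      have eE: "e \<in> E" using e XE by auto
      have togE: "tog X e \<subseteq> E" using XE eE by (auto simp: tog_def)
      have H: "\<And>f. f \<in> X \<union> Y - (X \<inter> Y) \<Longrightarrow> (X - {e, f}) \<union> ({e, f} - X) \<in> Od \<union> G \<Longrightarrow>
         \<exists>f\<in>X \<union> Y - (X \<inter> Y). (X - {e, f}) \<union> ({e, f} - X) \<in> Od \<union> G" by blast
      show "\<exists>f\<in>X \<union> Y - (X \<inter> Y). (X - {e, f}) \<union> ({e, f} - X) \<in> Od \<union> G"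
      proof (cases "even (card X)")
        case True
        then have "tog X e \<in> Od" using togE tog_odd[OF fX] by (simp add: Od_def)
        moreover have eq: "(X - {e,e}) \<union> ({e,e} - X) = tog X e" by (subst symd_eq) simp
        ultimately show ?thesis using e H[of e] unfolding eq by blast
      next
        case False
        show ?thesis
        proof (cases "\<exists>f\<in>X \<union> Y - (X \<inter> Y). f \<noteq> e")
          case True
          then obtain f where f: "f \<in> X \<union> Y - (X \<inter> Y)" "f \<noteq> e" by auto
          have fE': "f \<in> E" using f XE by auto
          have "tog (tog X e) f \<subseteq> E" using togE fE' by (auto simp: tog_def)
          moreover have "odd (card (tog (tog X e) f))"
            using tog_odd[OF tog_fin[OF fX, of e], of f] tog_odd[OF fX, of e] False by simp
          ultimately have "tog (tog X e) f \<in> Od" by (simp add: Od_def)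
          moreover have eq: "(X - {e,f}) \<union> ({e,f} - X) = tog (tog X e) f" using f by (subst symd_eq) simp
          ultimately show ?thesis using f H[of f] unfolding eq by blast
        next
          case False
          then have h: "\<And>x. x \<in> X \<union> Y - (X \<inter> Y) \<Longrightarrow> x = e" by blast
          have "Y = tog X e"
          proof (rule set_eqI)
            fix x
            show "x \<in> Y \<longleftrightarrow> x \<in> tog X e"
            proof (cases "x = e")
              case True
              then show ?thesis using e by (auto simp: tog_def)
            next
              case False
              then have "x \<in> X \<longleftrightarrow> x \<in> Y" using h[of x] by blast
              then show ?thesis using False by (auto simp: tog_def)
            qed
          qed
          moreover have eq: "(X - {e,e}) \<union> ({e,e} - X) = tog X e" by (subst symd_eq) simp
          ultimately show ?thesis using e Y H[of e] unfolding eq by blast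
        qed
      qed
    qed
    show ?thesis unfolding delta_matroid_def using fE ne sub ex by blast
  qed
  have fEv: "finite Ev" "finite Od" using fE
    by (auto simp: Ev_def Od_def intro: finite_subset[of _ "Pow E"])
  have disj: "Od \<inter> Ev = {}" by (auto simp: Od_def Ev_def)
  have inj: "inj_on (\<lambda>G. Od \<union> G) (Pow Ev)"
  proof (rule inj_onI)
    fix G H assume "G \<in> Pow Ev" "H \<in> Pow Ev" "Od \<union> G = Od \<union> H"
    then show "G = H" using disj by blast
  qed
  have img: "(\<lambda>G. Od \<union> G) ` Pow Ev \<subseteq> {F. delta_matroid E F}" using dmG by auto
  have "card (Pow Ev) \<le> card {F. delta_matroid E F}"
    by (rule card_inj_on_le[OF inj img dm_finite[OF fE]])
  moreover have "card (Pow Ev) = 2 ^ card Ev"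
    by (rule card_Pow[OF fEv(1)])
  moreover have "card Ev = 2^(n-1)"
  proof -
    have i1: "inj_on (\<lambda>X. tog X 1) Ev" by (metis inj_on_inverseI tog_tog)
    have i2: "inj_on (\<lambda>X. tog X 1) Od" by (metis inj_on_inverseI tog_tog)
    have s1: "(\<lambda>X. tog X 1) ` Ev \<subseteq> Od"
    proof
      fix Z assume "Z \<in> (\<lambda>X. tog X 1) ` Ev"
      then obtain X where X: "X \<in> Ev" "Z = tog X 1" by auto
      have "finite X" using X fE by (auto simp: Ev_def intro: finite_subset)
      then show "Z \<in> Od" using X oneE tog_odd[of X 1] by (auto simp: Ev_def Od_def tog_def)
    qed
    have s2: "(\<lambda>X. tog X 1) ` Od \<subseteq> Ev"
    proof
      fix Z assume "Z \<in> (\<lambda>X. tog X 1) ` Od"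
      then obtain X where X: "X \<in> Od" "Z = tog X 1" by auto
      have "finite X" using X fE by (auto simp: Od_def intro: finite_subset)
      then show "Z \<in> Ev" using X oneE tog_odd[of X 1] by (auto simp: Ev_def Od_def tog_def)
    qed
    have "card Ev = card Od"
      using card_inj_on_le[OF i1 s1 fEv(2)] card_inj_on_le[OF i2 s2 fEv(1)] by simp
    moreover have "Ev \<union> Od = Pow E" by (auto simp: Ev_def Od_def)
    hence "card Ev + card Od = 2^n"
      using card_Un_disjoint[OF fEv] disj card_Pow[of E] by (simp add: E_def Int_commute)
    ultimately have "2 * card Ev = 2 * 2^(n-1)"
      using n by (metis mult_2 power_eq_if One_nat_def not_one_le_zero)
    then show ?thesis by simp
  qed
  ultimately show ?thesis by (simp add: d_def E_def)
qed

lemma upperB: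
  assumes n: "n \<ge> 2"
  shows "d (Suc n) + 2 \<le> (d n + 1)^2"
proof -
  define m where "m = Suc n"
  define E where "E = {1..n}"
  define E' where "E' = {1..Suc n}"
  define D where "D = {F. delta_matroid E F}"
  define D' where "D' = {F. delta_matroid E' F}"
  define del where "del F = {X\<in>F. m \<notin> X}" for F :: "nat set set"
  define con where "con F = (\<lambda>X. X - {m}) ` {X\<in>F. m \<in> X}" for F :: "nat set set"
  define \<phi> where "\<phi> F = (del F, con F)" for F
  have fE: "finite E" "finite E'" by (auto simp: E_def E'_def)
  have E'eq: "E' = insert m E" by (auto simp: E_def E'_def m_def)
  have mE: "m \<notin> E" by (simp add: E_def m_def)
  have recon: "F = del F \<union> insert m ` con F" for F
  proof
    show "F \<subseteq> del F \<union> insert m ` con F"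
    proof
      fix X assume X: "X \<in> F"
      show "X \<in> del F \<union> insert m ` con F"
      proof (cases "m \<in> X")
        case True
        then have "X = insert m (X - {m})" by auto
        moreover have "X - {m} \<in> con F" using X True by (auto simp: con_def)
        ultimately show ?thesis by blast
      next
        case False
        then show ?thesis using X by (simp add: del_def)
      qed
    qed
  next
    show "del F \<union> insert m ` con F \<subseteq> F"
      by (auto simp: del_def con_def insert_absorb)
  qed
  have inj: "inj_on \<phi> D'"
  proof (rule inj_onI)
    fix F G assume "\<phi> F = \<phi> G"
    then have "del F = del G" "con F = con G" by (auto simp: \<phi>_def)
    then show "F = G" using recon[of F] recon[of G] by simp
  qed
  have dmdel: "del F \<in> D" if F: "F \<in> D'" and ne: "del F \<noteq> {}" for F
  proof -
    have dm: "finite E'" "F \<noteq> {}" "F \<subseteq> Pow E'"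
      "\<forall>X\<in>F. \<forall>Y\<in>F. \<forall>e\<in>X \<union> Y - (X \<inter> Y).
        \<exists>f\<in>X \<union> Y - (X \<inter> Y). (X - {e, f}) \<union> ({e, f} - X) \<in> F"
      using F by (auto simp: D'_def delta_matroid_def)
    have sub: "del F \<subseteq> Pow E" using dm(3) E'eq by (auto simp: del_def)
    have ex: "\<forall>X\<in>del F. \<forall>Y\<in>del F. \<forall>e\<in>X \<union> Y - (X \<inter> Y).
        \<exists>f\<in>X \<union> Y - (X \<inter> Y). (X - {e, f}) \<union> ({e, f} - X) \<in> del F"
    proof (intro ballI)
      fix X Y e assume X: "X \<in> del F" and Y: "Y \<in> del F" and e: "e \<in> X \<union> Y - (X \<inter> Y)"
      have XF: "X \<in> F" "Y \<in> F" "m \<notin> X" "m \<notin> Y" using X Y by (auto simp: del_def)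
      obtain f where f: "f \<in> X \<union> Y - (X \<inter> Y)" "(X - {e, f}) \<union> ({e, f} - X) \<in> F"
        using dm(4) XF e by blast
      have "m \<notin> (X - {e, f}) \<union> ({e, f} - X)" using XF e f(1) by auto
      then show "\<exists>f\<in>X \<union> Y - (X \<inter> Y). (X - {e, f}) \<union> ({e, f} - X) \<in> del F"
        using f by (auto simp: del_def)
    qed
    show ?thesis unfolding D_def delta_matroid_def using fE ne sub ex by blast
  qed
  have dmcon: "con F \<in> D" if F: "F \<in> D'" and ne: "con F \<noteq> {}" for F
  proof -
    have dm: "finite E'" "F \<noteq> {}" "F \<subseteq> Pow E'"
      "\<forall>X\<in>F. \<forall>Y\<in>F. \<forall>e\<in>X \<union> Y - (X \<inter> Y).
        \<exists>f\<in>X \<union> Y - (X \<inter> Y). (X - {e, f}) \<union> ({e, f} - X) \<in> F"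
      using F by (auto simp: D'_def delta_matroid_def)
    have sub: "con F \<subseteq> Pow E" using dm(3) E'eq by (auto simp: con_def)
    have ex: "\<forall>X'\<in>con F. \<forall>Y'\<in>con F. \<forall>e\<in>X' \<union> Y' - (X' \<inter> Y').
        \<exists>f\<in>X' \<union> Y' - (X' \<inter> Y'). (X' - {e, f}) \<union> ({e, f} - X') \<in> con F"
    proof (intro ballI)
      fix X' Y' e assume X': "X' \<in> con F" and Y': "Y' \<in> con F" and e: "e \<in> X' \<union> Y' - (X' \<inter> Y')"
      obtain X where X: "X \<in> F" "m \<in> X" "X' = X - {m}" using X' by (auto simp: con_def)
      obtain Y where Y: "Y \<in> F" "m \<in> Y" "Y' = Y - {m}" using Y' by (auto simp: con_def)
      have e2: "e \<in> X \<union> Y - (X \<inter> Y)" "e \<noteq> m" using e X Y by auto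
      obtain f where f: "f \<in> X \<union> Y - (X \<inter> Y)" "(X - {e, f}) \<union> ({e, f} - X) \<in> F"
        using dm(4) X Y e2 by blast
      have fm: "f \<noteq> m" using f(1) X Y by auto
      have f': "f \<in> X' \<union> Y' - (X' \<inter> Y')" using f(1) fm X Y by auto
      have "m \<in> (X - {e, f}) \<union> ({e, f} - X)" using X e2 fm by auto
      moreover have "(X - {e, f}) \<union> ({e, f} - X) - {m} = (X' - {e, f}) \<union> ({e, f} - X')"
        using X e2 fm by auto
      ultimately have "(X' - {e, f}) \<union> ({e, f} - X') \<in> con F"
        using f(2) unfolding con_def by (metis (mono_tags, lifting) image_eqI mem_Collect_eq)
      then show "\<exists>f\<in>X' \<union> Y' - (X' \<inter> Y'). (X' - {e, f}) \<union> ({e, f} - X') \<in> con F"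
        using f' by blast
    qed
    show ?thesis unfolding D_def delta_matroid_def using fE ne sub ex by blast
  qed
  define P where "P = insert {} D"
  have notD: "{} \<notin> D" by (simp add: D_def delta_matroid_def)
  have s1: "{{}} \<in> D" by (auto simp: D_def delta_matroid_def fE)
  have s2: "{E} \<in> D" by (auto simp: D_def delta_matroid_def fE)
  have bad: "\<phi> F \<noteq> ({{}}, {E})" if F: "F \<in> D'" for F
  proof
    assume "\<phi> F = ({{}}, {E})"
    then have "del F = {{}}" "con F = {E}" by (auto simp: \<phi>_def)
    then have FF: "F = {{}, E'}" using recon[of F] E'eq by auto
    have ex: "\<forall>X\<in>F. \<forall>Y\<in>F. \<forall>e\<in>X \<union> Y - (X \<inter> Y).
        \<exists>f\<in>X \<union> Y - (X \<inter> Y). (X - {e, f}) \<union> ({e, f} - X) \<in> F"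
      using F by (auto simp: D'_def delta_matroid_def)
    have "1 \<in> E'" "2 \<in> E'" "3 \<in> E'" using n by (auto simp: E'_def)
    then obtain f where "f \<in> E'" "({} - {1, f}) \<union> ({1, f} - {}) \<in> F"
      using ex FF by (metis (no_types, lifting) Diff_empty Int_empty_left Un_empty_left insertCI)
    then have "{1, f} = E'" using FF by auto
    then show False using \<open>2 \<in> E'\<close> \<open>3 \<in> E'\<close> by auto
  qed
  have fD: "finite D" "finite D'" using dm_finite fE by (auto simp: D_def D'_def)
  have sub: "\<phi> ` D' \<subseteq> (P \<times> P) - {({},{}), ({{}},{E})}"
  proof
    fix z assume "z \<in> \<phi> ` D'"
    then obtain F where F: "F \<in> D'" "z = \<phi> F" by auto
    have ne: "F \<noteq> {}" using F by (simp add: D'_def delta_matroid_def)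
    have "del F \<in> P" using dmdel[OF F(1)] by (auto simp: P_def)
    moreover have "con F \<in> P" using dmcon[OF F(1)] by (auto simp: P_def)
    moreover have "\<phi> F \<noteq> ({},{})" using recon[of F] ne by (auto simp: \<phi>_def)
    ultimately show "z \<in> (P \<times> P) - {({},{}), ({{}},{E})}" using F bad by (auto simp: \<phi>_def)
  qed
  have fP: "finite P" using fD by (simp add: P_def)
  have cP: "card P = card D + 1" using fD notD by (simp add: P_def)
  have "card D' = card (\<phi> ` D')" using card_image[OF inj] by simp
  also have "\<dots> \<le> card ((P \<times> P) - {({},{}), ({{}},{E})})"
    by (rule card_mono) (use fP sub in auto)
  also have "\<dots> = card (P \<times> P) - 2"
    using s1 s2 fP by (subst card_Diff_subset) (auto simp: P_def)
  also have "\<dots> = (card D + 1)^2 - 2" using cP by (simp add: card_cartesian_product power2_eq_square)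
  finally have "card D' \<le> (card D + 1)^2 - 2" .
  moreover have "d n = card D" "d (Suc n) = card D'" by (simp_all add: d_def D_def D'_def E_def E'_def)
  moreover have "(card D + 1)^2 \<ge> 2"
  proof -
    have "card D \<ge> 1" using fD s1 by (metis One_nat_def Suc_leI card_gt_0_iff empty_iff)
    then show ?thesis by (simp add: power2_eq_square)
  qed
  ultimately have "card D' + 2 \<le> (card D + 1)^2" by linarith
  then show ?thesis using \<open>d n = card D\<close> \<open>d (Suc n) = card D'\<close> by simp
qed

lemma gamma_pos:
  assumes n: "n \<ge> 1"
  shows "Gamma n > 0"
proof -
  have "(2::real)^(2^(n-1)) \<le> real (d n)"
    by (metis lowerA[OF n] of_nat_le_iff of_nat_numeral of_nat_power)
  hence h: "(2::real)^(2^(n-1)) < real (d n) + 1" by linarith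
  have "log 2 ((2::real)^(2^(n-1))) < log 2 (real (d n) + 1)"
    by (rule log_less) (use h in auto)
  hence h2: "(2::real)^(n-1) < log 2 (real (d n) + 1)" by simp
  have "log 2 ((2::real)^(n-1)) < log 2 (log 2 (real (d n) + 1))"
    by (rule log_less) (use h2 in auto)
  hence "real (n-1) < log 2 (log 2 (real (d n) + 1))" by simp
  then show ?thesis using n by (simp add: Gamma_def of_nat_diff)
qed

lemma gamma_dec:
  assumes n: "n \<ge> 2"
  shows "Gamma (Suc n) < Gamma n"
proof -
  define a where "a = real (d n) + 1"
  define b where "b = real (d (Suc n)) + 1"
  have "2^(2^(n-1)) \<le> d n" using lowerA n by simp
  moreover have "(1::nat) \<le> 2^(2^(n-1))" by simp
  ultimately have a2: "a \<ge> 2" unfolding a_def by linarith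
  have "2^(2^(Suc n-1)) \<le> d (Suc n)" using lowerA[of "Suc n"] by simp
  moreover have "(1::nat) \<le> 2^(2^(Suc n-1))" by simp
  ultimately have b2: "b \<ge> 2" unfolding b_def by linarith
  have "real (d (Suc n) + 2) \<le> real ((d n + 1)^2)" using upperB[OF n] by linarith
  hence "2 + real (d (Suc n)) \<le> (real (d n) + 1)^2" by (simp add: add.commute)
  hence ba: "b < a^2" unfolding a_def b_def by linarith
  have la: "log 2 a \<ge> 1" using a2 by simp
  have lb: "log 2 b \<ge> 1" using b2 by simp
  have "log 2 b < log 2 (a^2)" by (rule log_less) (use ba b2 in auto)
  also have "log 2 (a^2) = 2 * log 2 a" using a2 by (simp add: log_nat_power)
  finally have "log 2 b < 2 * log 2 a" .
  hence "log 2 (log 2 b) < log 2 (2 * log 2 a)" by (intro log_less) (use lb in auto)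
  also have "log 2 (2 * log 2 a) = 1 + log 2 (log 2 a)" using la by (simp add: log_mult)
  finally have "log 2 (log 2 b) < 1 + log 2 (log 2 a)" .
  then show ?thesis using n unfolding Gamma_def a_def b_def by (simp add: of_nat_diff)
qed

theorem theorem3p5:
  shows "(\<forall>n::nat. n \<ge> 1 \<longrightarrow> Gamma n > 0) \<and>
         (\<forall>n::nat. n \<ge> 2 \<longrightarrow> Gamma (Suc n) < Gamma n)"
  using gamma_pos gamma_dec by blast

end
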